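(* Let $p\in\mathscr P(\mathbb C)$. There is a constant $C>0$ such that for every $f\in\mathcal F^{p(\cdot)}$ and every $z\in\mathbb C$, \[|f(z)|\le C e^{|z|^2}\|f\|_{\mathcal F^{p(\cdot)}}.\] In particular each evaluation functional $f\mapsto f(z)$ is bounded on $\mathcal F^{p(\cdot)}$.
   Context: $A$ denotes Lebesgue area measure on $\mathbb C$. A variable exponent is a measurable function $p:\mathbb C\to[1,\infty)$; $p^+=\operatorname{ess\,sup}_{\mathbb C}p$, and $\mathscr P(\mathbb C)$ is the set of variable exponents with $p^+<\infty$. $\mathcal L^{p(\cdot)}$ is the space of measurable $f:\mathbb C\to\mathbb C$ such that $\int_{\mathbb C}(\lambda|f(z)|)^{p(z)}e^{-p(z)|z|^2}\,dA(z)<\infty$ for some $\lambda>0$, normed by $\|f\|_{\mathcal L^{p(\cdot)}}=\inf\{\lambda>0:\int_{\mathbb C}(|f(z)|/\lambda)^{p(z)}e^{-p(z)|z|^2}\,dA(z)\le1\}$. The variable exponent Fock space $\mathcal F^{p(\cdot)}$ is the set of entire functions belonging to $\mathcal L^{p(\cdot)}$, with the same norm $\|\cdot\|_{\mathcal F^{p(\cdot)}}=\|\cdot\|_{\mathcal L^{p(\cdot)}}$. *)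

theory Defs
  imports "HOL-Analysis.Analysis"
begin

definition variable_exponent :: "(complex \<Rightarrow> real) \<Rightarrow> bool" where
  "variable_exponent p \<longleftrightarrow> p \<in> borel_measurable lebesgue \<and> (\<forall>z. 1 \<le> p z)"

definition var_exp_class :: "(complex \<Rightarrow> real) set" where
  "var_exp_class = {p. variable_exponent p \<and> (\<exists>M::real. AE z in lebesgue. p z \<le> M)}"

definition fock_modular :: "(complex \<Rightarrow> real) \<Rightarrow> (complex \<Rightarrow> complex) \<Rightarrow> ennreal" where
  "fock_modular p g = (\<integral>\<^sup>+ z. ennreal ((cmod (g z)) powr (p z) * exp (- p z * (cmod z)\<^sup>2)) \<partial>lebesgue)"

definition var_L :: "(complex \<Rightarrow> real) \<Rightarrow> (complex \<Rightarrow> complex) set" where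
  "var_L p = {f. f \<in> borel_measurable lebesgue \<and>
      (\<exists>c>0. fock_modular p (\<lambda>z. of_real c * f z) < \<infinity>)}"

definition var_L_norm :: "(complex \<Rightarrow> real) \<Rightarrow> (complex \<Rightarrow> complex) \<Rightarrow> real" where
  "var_L_norm p f = Inf {t::real. t > 0 \<and> fock_modular p (\<lambda>z. f z / of_real t) \<le> 1}"

definition var_Fock :: "(complex \<Rightarrow> real) \<Rightarrow> (complex \<Rightarrow> complex) set" where
  "var_Fock p = {f. f holomorphic_on UNIV \<and> f \<in> var_L p}"

end

theory Submission
  imports Defs "HOL-Complex_Analysis.Complex_Analysis"
begin


lemma meas_pair: "(f :: real \<times> real \<Rightarrow> 'b::topological_space) \<in> borel_measurable borel \<Longrightarrow> f \<in> borel_measurable (lborel \<Otimes>\<^sub>M lborel)"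
  by (simp add: lborel_prod measurable_lborel1)

lemma lborel_complex: "(lborel :: complex measure) = distr (lborel \<Otimes>\<^sub>M lborel) borel (\<lambda>(x,y). Complex x y)"
proof (rule lborel_eqI)
  have m: "(\<lambda>(x,y). Complex x y) \<in> borel_measurable (lborel \<Otimes>\<^sub>M lborel)"
    apply (rule meas_pair) apply (rule borel_measurable_continuous_onI)
    by (auto intro!: continuous_intros simp: case_prod_unfold Complex_eq)
  fix l u :: complex assume le: "\<And>b. b \<in> Basis \<Longrightarrow> l \<bullet> b \<le> u \<bullet> b"
  have pre: "(\<lambda>(x,y). Complex x y) -` box l u \<inter> space (lborel \<Otimes>\<^sub>M lborel) = {Re l<..<Re u} \<times> {Im l<..<Im u}"
    by (auto simp: in_box_complex_iff space_pair_measure)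
  show "emeasure (distr (lborel \<Otimes>\<^sub>M lborel) borel (\<lambda>(x,y). Complex x y)) (box l u) = (\<Prod>b\<in>Basis. (u - l) \<bullet> b)"
    using le m
    apply (subst emeasure_distr)
      apply (auto simp: pre lborel.emeasure_pair_measure_Times Basis_complex_def)
    using le[of 1] le[of \<i>] by (auto simp: Basis_complex_def inner_complex_def ennreal_mult)
qed simp


lemma complex_area:
  assumes [measurable]: "F \<in> borel_measurable (borel :: complex measure)"
  shows "(\<integral>\<^sup>+w. F w \<partial>lborel) = (\<integral>\<^sup>+x. \<integral>\<^sup>+y. F (Complex x y) \<partial>lborel \<partial>lborel)"
proof -
  have m: "(\<lambda>(x,y). Complex x y) \<in> borel_measurable (lborel \<Otimes>\<^sub>M lborel)"
    apply (rule meas_pair) apply (rule borel_measurable_continuous_onI)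
    by (auto intro!: continuous_intros simp: case_prod_unfold Complex_eq)
  have m2: "(\<lambda>p. F (case p of (x,y) \<Rightarrow> Complex x y)) \<in> borel_measurable (lborel \<Otimes>\<^sub>M lborel)"
    using measurable_comp[OF m assms] by (simp add: o_def)
  have "(\<integral>\<^sup>+w. F w \<partial>lborel) = (\<integral>\<^sup>+p. F (case p of (x,y) \<Rightarrow> Complex x y) \<partial>(lborel \<Otimes>\<^sub>M lborel))"
    by (subst lborel_complex, subst nn_integral_distr) (use m in auto)
  also have "\<dots> = (\<integral>\<^sup>+x. \<integral>\<^sup>+y. F (Complex x y) \<partial>lborel \<partial>lborel)"
    using lborel.nn_integral_fst[OF m2] by simp
  finally show ?thesis .
qed


lemma L1:
  fixes f :: "real \<Rightarrow> ennreal"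
  assumes [measurable]: "f \<in> borel_measurable borel" and s: "1/2 \<le> s" "s \<le> 1" and rr: "rh = 1 \<or> rh = -1"
  shows "(\<integral>\<^sup>+t. indicator {0..1} t * f (a + rh * s*(2*t-1)) \<partial>lborel) \<le> (\<integral>\<^sup>+x. indicator {a-1..a+1} x * f x \<partial>lborel)"
proof -
  have c: "2*rh * s \<noteq> 0" using s rr by auto
  have eq: "(\<integral>\<^sup>+x. indicator {a-1..a+1} x * f x \<partial>lborel) = ennreal \<bar>2*rh * s\<bar> * (\<integral>\<^sup>+t. indicator {a-1..a+1} ((a - rh * s) + (2*rh * s) * t) * f ((a - rh * s) + (2*rh * s) * t) \<partial>lborel)"
    by (rule nn_integral_real_affine[OF _ c]) simp
  have "(\<integral>\<^sup>+t. indicator {0..1} t * f (a + rh * s*(2*t-1)) \<partial>lborel) \<le> (\<integral>\<^sup>+t. indicator {a-1..a+1} ((a - rh * s) + (2*rh * s) * t) * f ((a - rh * s) + (2*rh * s) * t) \<partial>lborel)"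
  proof (rule nn_integral_mono)
    fix t :: real
    show "indicator {0..1} t * f (a + rh * s*(2*t-1)) \<le> indicator {a-1..a+1} ((a - rh * s) + (2*rh * s) * t) * f ((a - rh * s) + (2*rh * s) * t)"
    proof (cases "t \<in> {0..1}")
      case True
      have e: "(a - rh * s) + (2*rh * s) * t = a + rh * s*(2*t-1)" by (simp add: algebra_simps)
      have t1: "\<bar>2*t-1\<bar> \<le> 1" using True by auto
      have "\<bar>rh * s * (2*t-1)\<bar> = s * \<bar>2*t-1\<bar>" using rr s by (auto simp: abs_mult)
      also have "\<dots> \<le> 1" using t1 s by (simp add: mult_le_one)
      finally have "a + rh * s*(2*t-1) \<in> {a-1..a+1}" by (auto simp: abs_le_iff)
      then have "indicator {a-1..a+1} ((a - rh * s) + (2*rh * s) * t) = (1::ennreal)"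
        unfolding e by simp
      moreover have "indicator {0..1} t = (1::ennreal)" using True by simp
      ultimately show ?thesis unfolding e by simp
    qed simp
  qed
  also have "\<dots> \<le> ennreal \<bar>2*rh * s\<bar> * (\<integral>\<^sup>+t. indicator {a-1..a+1} ((a - rh * s) + (2*rh * s) * t) * f ((a - rh * s) + (2*rh * s) * t) \<partial>lborel)"
  proof -
    have a2: "\<bar>2*rh * s\<bar> = 2 * s" using rr s by auto
    have "ennreal 1 \<le> ennreal (2 * s)" by (rule ennreal_leI) (use s in simp)
    then have "1 \<le> ennreal \<bar>2*rh * s\<bar>" unfolding a2 by simp
    from mult_right_mono[OF this zero_le] show ?thesis by simp
  qed
  finally show ?thesis by (subst eq)
qed


lemma L2:
  fixes f :: "real \<Rightarrow> ennreal"
  assumes [measurable]: "f \<in> borel_measurable borel" and rr: "sg = 1 \<or> sg = -1"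
  shows "(\<integral>\<^sup>+s. indicator {1/2..1} s * f (b + sg * s) \<partial>lborel) \<le> (\<integral>\<^sup>+y. indicator {b-1..b+1} y * f y \<partial>lborel)"
proof -
  have c: "sg \<noteq> 0" using rr by auto
  have eq: "(\<integral>\<^sup>+y. indicator {b-1..b+1} y * f y \<partial>lborel) = ennreal \<bar>sg\<bar> * (\<integral>\<^sup>+s. indicator {b-1..b+1} (b + sg * s) * f (b + sg * s) \<partial>lborel)"
    by (rule nn_integral_real_affine[OF _ c]) simp
  have "(\<integral>\<^sup>+s. indicator {1/2..1} s * f (b + sg * s) \<partial>lborel) \<le> (\<integral>\<^sup>+s. indicator {b-1..b+1} (b + sg * s) * f (b + sg * s) \<partial>lborel)"
    by (rule nn_integral_mono) (use rr in \<open>auto simp: indicator_def\<close>)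
  then show ?thesis using eq rr by auto
qed


lemma Hbound:
  fixes h :: "real \<times> real \<Rightarrow> real"
  assumes hc: "continuous_on UNIV h" and rr: "rh = 1 \<or> rh = -1" and ss: "sg = 1 \<or> sg = -1"
  shows "(\<integral>\<^sup>+s. indicator {1/2..1} s * (\<integral>\<^sup>+t. indicator {0..1} t * ennreal (h (a + rh * s * (2*t-1), b + sg * s)) \<partial>lborel) \<partial>lborel)
    \<le> (\<integral>\<^sup>+y. indicator {b-1..b+1} y * (\<integral>\<^sup>+x. indicator {a-1..a+1} x * ennreal (h (x, y)) \<partial>lborel) \<partial>lborel)"
proof -
  have hm[measurable]: "h \<in> borel_measurable borel" using hc by (rule borel_measurable_continuous_onI)
  define A where "A y = (\<integral>\<^sup>+x. indicator {a-1..a+1} x * ennreal (h (x, y)) \<partial>lborel)" for y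
  have pm: "(\<lambda>(y,x). indicator {a-1..a+1} x * ennreal (h (x, y))) \<in> borel_measurable (lborel \<Otimes>\<^sub>M lborel)"
  proof -
    have "continuous_on UNIV (\<lambda>p::real\<times>real. h (snd p, fst p))"
      by (rule continuous_on_compose2[OF hc]) (auto intro!: continuous_intros)
    then have [measurable]: "(\<lambda>p::real\<times>real. h (snd p, fst p)) \<in> borel_measurable (lborel \<Otimes>\<^sub>M lborel)"
      by (intro meas_pair borel_measurable_continuous_onI)
    show ?thesis by (simp add: case_prod_unfold) measurable
  qed
  have Am[measurable]: "A \<in> borel_measurable borel"
    unfolding A_def using lborel.borel_measurable_nn_integral[OF pm] by (simp add: measurable_lborel1)
  have "(\<integral>\<^sup>+s. indicator {1/2..1} s * (\<integral>\<^sup>+t. indicator {0..1} t * ennreal (h (a + rh * s * (2*t-1), b + sg * s)) \<partial>lborel) \<partial>lborel)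
     \<le> (\<integral>\<^sup>+s. indicator {1/2..1} s * A (b + sg * s) \<partial>lborel)"
  proof (rule nn_integral_mono)
    fix s :: real
    show "indicator {1/2..1} s * (\<integral>\<^sup>+t. indicator {0..1} t * ennreal (h (a + rh * s * (2*t-1), b + sg * s)) \<partial>lborel) \<le> indicator {1/2..1} s * A (b + sg * s)"
    proof (cases "s \<in> {1/2..1}")
      case True
      have "(\<integral>\<^sup>+t. indicator {0..1} t * ennreal (h (a + rh * s * (2*t-1), b + sg * s)) \<partial>lborel) \<le> A (b + sg * s)"
        unfolding A_def by (rule L1[where f="\<lambda>x. ennreal (h (x, b + sg * s))"]) (use True rr in auto)
      then show ?thesis by (rule mult_left_mono) simp
    qed simp
  qed
  also have "\<dots> \<le> (\<integral>\<^sup>+y. indicator {b-1..b+1} y * A y \<partial>lborel)"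
    by (rule L2[OF Am ss])
  finally show ?thesis unfolding A_def .
qed


lemma edge:
  fixes G :: "complex \<Rightarrow> complex"
  assumes Gc: "continuous_on UNIV G" and s: "s > 0" and d: "cmod (v - u) = 2 * s"
    and P: "\<And>t. linepath u v t = P t" and far: "\<And>t. t \<in> {0..1} \<Longrightarrow> s \<le> cmod (P t - z)"
    and I: "((\<lambda>w. G w / (w - z)) has_contour_integral I) (linepath u v)"
  shows "ennreal (cmod I) \<le> (\<integral>\<^sup>+t. indicator {0..1} t * ennreal (2 * cmod (G (P t))) \<partial>lborel)"
proof -
  have q: "((\<lambda>t. G (linepath u v t) / (linepath u v t - z) * (v - u)) has_integral I) {0..1}"
    using I by (simp add: has_contour_integral_linepath)
  have Pc: "continuous_on {0..1} P"
  proof -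
    have "continuous_on {0..1} (linepath u v)" by (rule continuous_on_linepath)
    then show ?thesis using P by (metis ext)
  qed
  have gc: "continuous_on {0..1} (\<lambda>t. 2 * cmod (G (P t)))"
    by (intro continuous_intros continuous_on_compose2[OF Gc Pc]) auto
  have gi: "((\<lambda>t. 2 * cmod (G (P t))) has_integral integral {0..1} (\<lambda>t. 2 * cmod (G (P t)))) {0..1}"
    using integrable_continuous_real[OF gc] by (simp add: has_integral_integral)
  have le: "cmod I \<le> integral {0..1} (\<lambda>t. 2 * cmod (G (P t)))"
  proof -
    have "cmod (integral {0..1} (\<lambda>t. G (linepath u v t) / (linepath u v t - z) * (v - u))) \<le> integral {0..1} (\<lambda>t. 2 * cmod (G (P t)))"
    proof (rule integral_norm_bound_integral)
      show "(\<lambda>t. G (linepath u v t) / (linepath u v t - z) * (v - u)) integrable_on {0..1}"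
        using q by blast
      show "(\<lambda>t. 2 * cmod (G (P t))) integrable_on {0..1}" using gi by blast
      fix t :: real assume t: "t \<in> {0..1}"
      have f: "s \<le> cmod (P t - z)" using far[OF t] .
      have "cmod (G (P t) / (P t - z) * (v - u)) = cmod (G (P t)) / cmod (P t - z) * (2 * s)"
        by (simp add: norm_mult norm_divide d)
      also have "\<dots> \<le> cmod (G (P t)) / s * (2 * s)"
        proof -
        have "0 < cmod (P t - z) * s" using f s by (intro mult_pos_pos) auto
        then show ?thesis using f s by (intro mult_right_mono divide_left_mono) auto
      qed
      also have "\<dots> = 2 * cmod (G (P t))" using s by simp
      finally show "cmod (G (linepath u v t) / (linepath u v t - z) * (v - u)) \<le> 2 * cmod (G (P t))"
        by (simp add: P)
    qed
    then show ?thesis using integral_unique[OF q] by simp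
  qed
  have eq: "ennreal (integral {0..1} (\<lambda>t. 2 * cmod (G (P t)))) = (\<integral>\<^sup>+t. indicator {0..1} t * ennreal (2 * cmod (G (P t))) \<partial>lborel)"
  proof -
    have "(\<integral>\<^sup>+t. ennreal (indicator {0..1} t * (2 * cmod (G (P t)))) \<partial>lborel) = ennreal (integral {0..1} (\<lambda>t. 2 * cmod (G (P t))))"
      by (rule nn_integral_has_integral_lebesgue[OF _ gi]) simp
    moreover have "(\<integral>\<^sup>+t. ennreal (indicator {0..1} t * (2 * cmod (G (P t)))) \<partial>lborel) = (\<integral>\<^sup>+t. indicator {0..1} t * ennreal (2 * cmod (G (P t))) \<partial>lborel)"
      by (rule nn_integral_cong) (simp add: indicator_def)
    ultimately show ?thesis by simp
  qed
  show ?thesis using ennreal_leI[OF le] eq by simp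
qed



lemma square:
  fixes G :: "complex \<Rightarrow> complex"
  assumes hol: "G holomorphic_on UNIV" and s: "s > 0"
  shows "ennreal (2*pi*cmod (G z)) \<le>
   (\<integral>\<^sup>+t. indicator {0..1} t * ennreal (2 * cmod (G (Complex (Re z + 1 * s * (2*t-1)) (Im z + (-1) * s)))) \<partial>lborel) +
   (\<integral>\<^sup>+t. indicator {0..1} t * ennreal (2 * cmod (G (Complex (Re z + 1 * s) (Im z + 1 * s * (2*t-1))))) \<partial>lborel) +
   (\<integral>\<^sup>+t. indicator {0..1} t * ennreal (2 * cmod (G (Complex (Re z + (-1) * s * (2*t-1)) (Im z + 1 * s)))) \<partial>lborel) +
   (\<integral>\<^sup>+t. indicator {0..1} t * ennreal (2 * cmod (G (Complex (Re z + (-1) * s) (Im z + (-1) * s * (2*t-1))))) \<partial>lborel)"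
proof -
  define a1 where "a1 = Complex (Re z - s) (Im z - s)"
  define a2 where "a2 = Complex (Re z + s) (Im z - s)"
  define a3 where "a3 = Complex (Re z + s) (Im z + s)"
  define a4 where "a4 = Complex (Re z - s) (Im z + s)"
  define f where "f = (\<lambda>w. G w / (w - z))"
  have sq4: "sqrt (4 * s\<^sup>2) = 2 * s"
    by (rule real_sqrt_unique) (use s in \<open>simp_all add: power_mult_distrib\<close>)
  have Gc: "continuous_on UNIV G" using hol by (rule holomorphic_on_imp_continuous_on)
  have rp: "rectpath a1 a3 = linepath a1 a2 +++ linepath a2 a3 +++ linepath a3 a4 +++ linepath a4 a1"
    by (simp add: rectpath_def Let_def a1_def a2_def a3_def a4_def)
  have zb: "z \<in> box a1 a3" using s by (simp add: in_box_complex_iff a1_def a3_def)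
  have wn: "winding_number (rectpath a1 a3) z = 1" by (rule winding_number_rectpath[OF zb])
  have znot: "z \<notin> path_image (rectpath a1 a3)"
    using zb s by (simp add: path_image_rectpath_cbox_minus_box a1_def a3_def)
  have C: "(f has_contour_integral (2*pi*\<i>*winding_number (rectpath a1 a3) z * G z)) (rectpath a1 a3)"
    unfolding f_def
    by (rule Cauchy_integral_formula_convex_simple[where S=UNIV]) (use hol znot in auto)
  then have C1: "(f has_contour_integral (2*pi*\<i>* G z)) (rectpath a1 a3)" using wn by simp
  then have fi: "f contour_integrable_on (linepath a1 a2 +++ linepath a2 a3 +++ linepath a3 a4 +++ linepath a4 a1)"
    using rp by (metis contour_integrable_on_def)
  have i1: "f contour_integrable_on linepath a1 a2" and i2: "f contour_integrable_on linepath a2 a3"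
    and i3: "f contour_integrable_on linepath a3 a4" and i4: "f contour_integrable_on linepath a4 a1"
    using fi by (auto simp: valid_path_join)
  have sum: "2*pi*\<i>* G z = contour_integral (linepath a1 a2) f + contour_integral (linepath a2 a3) f
      + contour_integral (linepath a3 a4) f + contour_integral (linepath a4 a1) f"
  proof -
    have "2*pi*\<i>* G z = contour_integral (rectpath a1 a3) f" using contour_integral_unique[OF C1] by simp
    also have "\<dots> = contour_integral (linepath a1 a2) f + (contour_integral (linepath a2 a3) f
      + (contour_integral (linepath a3 a4) f + contour_integral (linepath a4 a1) f))"
      unfolding rp using i1 i2 i3 i4 by (simp add: valid_path_join)
    finally show ?thesis by (simp add: add_ac)
  qed
  have e1: "ennreal (cmod (contour_integral (linepath a1 a2) f)) \<le> (\<integral>\<^sup>+t. indicator {0..1} t * ennreal (2 * cmod (G (Complex (Re z + 1 * s * (2*t-1)) (Im z + (-1) * s)))) \<partial>lborel)"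
  proof (rule edge[OF Gc s, where z=z])
    show "cmod (a2 - a1) = 2 * s" using s by (simp add: a1_def a2_def cmod_def sq4)
    show "linepath a1 a2 t = Complex (Re z + 1 * s * (2*t-1)) (Im z + (-1) * s)" for t
      by (simp add: linepath_def a1_def a2_def complex_eq_iff algebra_simps)
    show "s \<le> cmod (Complex (Re z + 1 * s * (2*t-1)) (Im z + (-1) * s) - z)" for t
      using abs_Im_le_cmod[of "Complex (Re z + 1 * s * (2*t-1)) (Im z + (-1) * s) - z"] s by simp
    show "((\<lambda>w. G w / (w - z)) has_contour_integral contour_integral (linepath a1 a2) f) (linepath a1 a2)"
      using has_contour_integral_integral[OF i1] by (simp add: f_def)
  qed
  have e2: "ennreal (cmod (contour_integral (linepath a2 a3) f)) \<le> (\<integral>\<^sup>+t. indicator {0..1} t * ennreal (2 * cmod (G (Complex (Re z + 1 * s) (Im z + 1 * s * (2*t-1))))) \<partial>lborel)"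
  proof (rule edge[OF Gc s, where z=z])
    show "cmod (a3 - a2) = 2 * s" using s by (simp add: a3_def a2_def cmod_def sq4)
    show "linepath a2 a3 t = Complex (Re z + 1 * s) (Im z + 1 * s * (2*t-1))" for t
      by (simp add: linepath_def a3_def a2_def complex_eq_iff algebra_simps)
    show "s \<le> cmod (Complex (Re z + 1 * s) (Im z + 1 * s * (2*t-1)) - z)" for t
      using abs_Re_le_cmod[of "Complex (Re z + 1 * s) (Im z + 1 * s * (2*t-1)) - z"] s by simp
    show "((\<lambda>w. G w / (w - z)) has_contour_integral contour_integral (linepath a2 a3) f) (linepath a2 a3)"
      using has_contour_integral_integral[OF i2] by (simp add: f_def)
  qed
  have e3: "ennreal (cmod (contour_integral (linepath a3 a4) f)) \<le> (\<integral>\<^sup>+t. indicator {0..1} t * ennreal (2 * cmod (G (Complex (Re z + (-1) * s * (2*t-1)) (Im z + 1 * s)))) \<partial>lborel)"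
  proof (rule edge[OF Gc s, where z=z])
    show "cmod (a4 - a3) = 2 * s" using s by (simp add: a3_def a4_def cmod_def sq4)
    show "linepath a3 a4 t = Complex (Re z + (-1) * s * (2*t-1)) (Im z + 1 * s)" for t
      by (simp add: linepath_def a3_def a4_def complex_eq_iff algebra_simps)
    show "s \<le> cmod (Complex (Re z + (-1) * s * (2*t-1)) (Im z + 1 * s) - z)" for t
      using abs_Im_le_cmod[of "Complex (Re z + (-1) * s * (2*t-1)) (Im z + 1 * s) - z"] s by simp
    show "((\<lambda>w. G w / (w - z)) has_contour_integral contour_integral (linepath a3 a4) f) (linepath a3 a4)"
      using has_contour_integral_integral[OF i3] by (simp add: f_def)
  qed
  have e4: "ennreal (cmod (contour_integral (linepath a4 a1) f)) \<le> (\<integral>\<^sup>+t. indicator {0..1} t * ennreal (2 * cmod (G (Complex (Re z + (-1) * s) (Im z + (-1) * s * (2*t-1))))) \<partial>lborel)"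
  proof (rule edge[OF Gc s, where z=z])
    show "cmod (a1 - a4) = 2 * s" using s by (simp add: a1_def a4_def cmod_def sq4)
    show "linepath a4 a1 t = Complex (Re z + (-1) * s) (Im z + (-1) * s * (2*t-1))" for t
      by (simp add: linepath_def a1_def a4_def complex_eq_iff algebra_simps)
    show "s \<le> cmod (Complex (Re z + (-1) * s) (Im z + (-1) * s * (2*t-1)) - z)" for t
      using abs_Re_le_cmod[of "Complex (Re z + (-1) * s) (Im z + (-1) * s * (2*t-1)) - z"] s by simp
    show "((\<lambda>w. G w / (w - z)) has_contour_integral contour_integral (linepath a4 a1) f) (linepath a4 a1)"
      using has_contour_integral_integral[OF i4] by (simp add: f_def)
  qed
  have "2*pi*cmod (G z) = cmod (2*pi*\<i>* G z)" by (simp add: norm_mult)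
  also have "\<dots> \<le> cmod (contour_integral (linepath a1 a2) f) + cmod (contour_integral (linepath a2 a3) f)
      + cmod (contour_integral (linepath a3 a4) f) + cmod (contour_integral (linepath a4 a1) f)"
    unfolding sum by (intro order.trans[OF norm_triangle_ineq] add_mono order_refl)
  finally have X: "ennreal (2*pi*cmod (G z)) \<le> ennreal (cmod (contour_integral (linepath a1 a2) f)) + ennreal (cmod (contour_integral (linepath a2 a3) f))
      + ennreal (cmod (contour_integral (linepath a3 a4) f)) + ennreal (cmod (contour_integral (linepath a4 a1) f))"
    by (simp add: ennreal_plus[symmetric] del: ennreal_plus)
  show ?thesis by (rule order_trans[OF X]) (intro add_mono e1 e2 e3 e4)
qed


lemma meas_Complex[measurable]:
  "f \<in> borel_measurable M \<Longrightarrow> g \<in> borel_measurable M \<Longrightarrow> (\<lambda>x. Complex (f x) (g x)) \<in> borel_measurable M"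
  unfolding Complex_eq by (intro borel_measurable_add borel_measurable_times; measurable)

lemma mean:
  fixes G :: "complex \<Rightarrow> complex"
  assumes hol: "G holomorphic_on UNIV"
  shows "ennreal (pi * cmod (G z)) \<le> 4 * (\<integral>\<^sup>+w. indicator {w. Re w \<in> {Re z-1..Re z+1} \<and> Im w \<in> {Im z-1..Im z+1}} w * ennreal (2 * cmod (G w)) \<partial>lborel)"
proof -
  define a where "a = Re z"
  define b where "b = Im z"
  have Gc: "continuous_on UNIV G" using hol by (rule holomorphic_on_imp_continuous_on)
  have Gm[measurable]: "G \<in> borel_measurable borel" using Gc by (rule borel_measurable_continuous_onI)
  define h where "h = (\<lambda>p::real\<times>real. 2 * cmod (G (Complex (fst p) (snd p))))"
  have hc: "continuous_on UNIV h" unfolding h_def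
    by (intro continuous_intros continuous_on_compose2[OF Gc]) (auto intro!: continuous_intros simp: Complex_eq)
  have hc': "continuous_on UNIV (\<lambda>p. h (snd p, fst p))"
    by (rule continuous_on_compose2[OF hc]) (auto intro!: continuous_intros)
  define RH where "RH = (\<integral>\<^sup>+y. indicator {b-1..b+1} y * (\<integral>\<^sup>+x. indicator {a-1..a+1} x * ennreal (h (x, y)) \<partial>lborel) \<partial>lborel)"
  define RV where "RV = (\<integral>\<^sup>+x. indicator {a-1..a+1} x * (\<integral>\<^sup>+y. indicator {b-1..b+1} y * ennreal (h (x, y)) \<partial>lborel) \<partial>lborel)"
  define W where "W = (\<integral>\<^sup>+w. indicator {w. Re w \<in> {Re z-1..Re z+1} \<and> Im w \<in> {Im z-1..Im z+1}} w * ennreal (2 * cmod (G w)) \<partial>lborel)"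
  have WV: "W = RV"
  proof -
    have "W = (\<integral>\<^sup>+x. \<integral>\<^sup>+y. indicator {w. Re w \<in> {Re z-1..Re z+1} \<and> Im w \<in> {Im z-1..Im z+1}} (Complex x y) * ennreal (2 * cmod (G (Complex x y))) \<partial>lborel \<partial>lborel)"
      unfolding W_def by (rule complex_area) measurable
    also have "\<dots> = (\<integral>\<^sup>+x. \<integral>\<^sup>+y. indicator {a-1..a+1} x * (indicator {b-1..b+1} y * ennreal (h (x, y))) \<partial>lborel \<partial>lborel)"
      by (intro nn_integral_cong) (auto simp: indicator_def h_def a_def b_def)
    also have "\<dots> = RV"
      unfolding RV_def by (intro nn_integral_cong nn_integral_cmult) (simp add: h_def)
    finally show ?thesis .
  qed
  have HV: "RH = RV"
  proof -
    have "RH = (\<integral>\<^sup>+y. \<integral>\<^sup>+x. indicator {a-1..a+1} x * indicator {b-1..b+1} y * ennreal (h (x, y)) \<partial>lborel \<partial>lborel)"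
      unfolding RH_def
      by (intro nn_integral_cong) (subst nn_integral_cmult[symmetric], simp add: h_def, simp add: ac_simps)
    also have "\<dots> = (\<integral>\<^sup>+x. \<integral>\<^sup>+y. indicator {a-1..a+1} x * indicator {b-1..b+1} y * ennreal (h (x, y)) \<partial>lborel \<partial>lborel)"
    proof (rule lborel_pair.Fubini')
      have [measurable]: "h \<in> borel_measurable (lborel \<Otimes>\<^sub>M lborel)"
        by (intro meas_pair borel_measurable_continuous_onI hc)
      show "(\<lambda>(x, y). indicator {a-1..a+1} x * indicator {b-1..b+1} y * ennreal (h (x, y))) \<in> borel_measurable (lborel \<Otimes>\<^sub>M lborel)"
        by (simp add: case_prod_unfold) measurable
    qed
    also have "\<dots> = RV"
      unfolding RV_def
      by (intro nn_integral_cong) (subst nn_integral_cmult[symmetric], simp add: h_def, simp add: ac_simps)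
    finally show ?thesis .
  qed
  define E1 where "E1 s = (\<integral>\<^sup>+t. indicator {0..1} t * ennreal (h (a + 1 * s * (2*t-1), b + (-1) * s)) \<partial>lborel)" for s
  define E2 where "E2 s = (\<integral>\<^sup>+t. indicator {0..1} t * ennreal (h (a + 1 * s, b + 1 * s * (2*t-1))) \<partial>lborel)" for s
  define E3 where "E3 s = (\<integral>\<^sup>+t. indicator {0..1} t * ennreal (h (a + (-1) * s * (2*t-1), b + 1 * s)) \<partial>lborel)" for s
  define E4 where "E4 s = (\<integral>\<^sup>+t. indicator {0..1} t * ennreal (h (a + (-1) * s, b + (-1) * s * (2*t-1))) \<partial>lborel)" for s
  have sq: "ennreal (2*pi*cmod (G z)) \<le> E1 s + E2 s + E3 s + E4 s" if "s > 0" for s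
    using square[OF hol that, of z] unfolding E1_def E2_def E3_def E4_def h_def a_def b_def by simp
  have m1[measurable]: "(\<lambda>s. indicator {1/2..1} s * E1 s) \<in> borel_measurable lborel"
    unfolding E1_def h_def by measurable
  have m2[measurable]: "(\<lambda>s. indicator {1/2..1} s * E2 s) \<in> borel_measurable lborel"
    unfolding E2_def h_def by measurable
  have m3[measurable]: "(\<lambda>s. indicator {1/2..1} s * E3 s) \<in> borel_measurable lborel"
    unfolding E3_def h_def by measurable
  have m4[measurable]: "(\<lambda>s. indicator {1/2..1} s * E4 s) \<in> borel_measurable lborel"
    unfolding E4_def h_def by measurable
  have "(\<integral>\<^sup>+s. ennreal (2*pi*cmod (G z)) * indicator {1/2..1::real} s \<partial>lborel) = ennreal (2*pi*cmod (G z)) * ennreal (1/2)"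
    by (subst nn_integral_cmult_indicator) auto
  also have "\<dots> = ennreal (pi * cmod (G z))" by (subst ennreal_mult[symmetric]) auto
  finally have "ennreal (pi * cmod (G z)) = (\<integral>\<^sup>+s. ennreal (2*pi*cmod (G z)) * indicator {1/2..1::real} s \<partial>lborel)" by simp
  also have "\<dots> \<le> (\<integral>\<^sup>+s. indicator {1/2..1} s * E1 s + indicator {1/2..1} s * E2 s + indicator {1/2..1} s * E3 s + indicator {1/2..1} s * E4 s \<partial>lborel)"
  proof (rule nn_integral_mono)
    fix s :: real
    show "ennreal (2*pi*cmod (G z)) * indicator {1/2..1} s \<le> indicator {1/2..1} s * E1 s + indicator {1/2..1} s * E2 s + indicator {1/2..1} s * E3 s + indicator {1/2..1} s * E4 s"
    proof (cases "s \<in> {1/2..1}")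
      case True
      then have "s > 0" by auto
      then show ?thesis using sq[of s] True by simp
    qed simp
  qed
  also have "\<dots> = (\<integral>\<^sup>+s. indicator {1/2..1} s * E1 s \<partial>lborel) + (\<integral>\<^sup>+s. indicator {1/2..1} s * E2 s \<partial>lborel)
       + (\<integral>\<^sup>+s. indicator {1/2..1} s * E3 s \<partial>lborel) + (\<integral>\<^sup>+s. indicator {1/2..1} s * E4 s \<partial>lborel)"
    by (simp add: nn_integral_add)
  also have "\<dots> \<le> RH + RV + RH + RV"
  proof (intro add_mono)
    show "(\<integral>\<^sup>+s. indicator {1/2..1} s * E1 s \<partial>lborel) \<le> RH"
      unfolding E1_def RH_def by (rule Hbound[OF hc]) auto
    show "(\<integral>\<^sup>+s. indicator {1/2..1} s * E3 s \<partial>lborel) \<le> RH"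
      unfolding E3_def RH_def by (rule Hbound[OF hc]) auto
    show "(\<integral>\<^sup>+s. indicator {1/2..1} s * E2 s \<partial>lborel) \<le> RV"
      unfolding E2_def RV_def using Hbound[OF hc', of 1 1 b a] by simp
    show "(\<integral>\<^sup>+s. indicator {1/2..1} s * E4 s \<partial>lborel) \<le> RV"
      unfolding E4_def RV_def using Hbound[OF hc', of "-1" "-1" b a] by simp
  qed
  also have "\<dots> = 4 * W"
  proof -
    have "(4::ennreal) * W = (1+1+1+1) * W" by simp
    also have "\<dots> = W+W+W+W" by (simp only: distrib_right mult_1)
    finally show ?thesis using HV WV by simp
  qed
  finally show ?thesis unfolding W_def .
qed


lemma modm:
  assumes [measurable]: "p \<in> borel_measurable lebesgue" "f \<in> borel_measurable lebesgue"
  shows "(\<lambda>z. ennreal (cmod (f z) powr (p z) * exp (- p z * (cmod z)\<^sup>2))) \<in> borel_measurable lebesgue"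
proof -
  have [measurable]: "(\<lambda>x::complex. x) \<in> borel_measurable lebesgue"
    using measurable_completion[of "\<lambda>x::complex. x" lborel borel] by simp
  show ?thesis by measurable
qed

lemma A_le: fixes A q :: real assumes "0 \<le> A" "1 \<le> q" shows "A \<le> 1 + A powr q"
proof (cases "A \<le> 1")
  case True then show ?thesis using assms by (smt (verit) powr_ge_zero)
next
  case False
  then have "A powr 1 \<le> A powr q" using assms by (intro powr_mono) auto
  then show ?thesis using False by simp
qed

lemma G_norm:
  fixes g :: "complex \<Rightarrow> complex"
  shows "cmod (g w * exp (of_real ((cmod z)\<^sup>2) - 2 * cnj z * w)) = cmod (g w) * exp (- (cmod w)\<^sup>2) * exp ((cmod (w - z))\<^sup>2)"
proof -
  have "Re (of_real ((cmod z)\<^sup>2) - 2 * cnj z * w) = - (cmod w)\<^sup>2 + (cmod (w - z))\<^sup>2"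
  proof -
    have e1: "(cmod w)\<^sup>2 = (Re w)\<^sup>2 + (Im w)\<^sup>2" "(cmod z)\<^sup>2 = (Re z)\<^sup>2 + (Im z)\<^sup>2"
      "(cmod (w - z))\<^sup>2 = (Re w - Re z)\<^sup>2 + (Im w - Im z)\<^sup>2" by (simp_all add: cmod_power2)
    have "Re (of_real ((cmod z)\<^sup>2) - 2 * cnj z * w) = (cmod z)\<^sup>2 - 2 * (Re z * Re w + Im z * Im w)"
      by simp
    then show ?thesis unfolding e1 by (simp add: power2_eq_square algebra_simps)
  qed
  then have "cmod (exp (of_real ((cmod z)\<^sup>2) - 2 * cnj z * w)) = exp (- (cmod w)\<^sup>2 + (cmod (w - z))\<^sup>2)"
    by (simp only: norm_exp_eq_Re)
  then show ?thesis by (simp only: norm_mult mult_exp_exp[symmetric] mult.assoc)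
qed



lemma pointwise:
  fixes g :: "complex \<Rightarrow> complex"
  assumes hol: "g holomorphic_on UNIV" and pm: "p \<in> borel_measurable lebesgue" and p1: "\<And>z. 1 \<le> p z"
    and gm: "g \<in> borel_measurable lebesgue" and md: "fock_modular p g \<le> 1"
  shows "cmod (g z) \<le> (40 * exp 2 / pi) * exp ((cmod z)\<^sup>2)"
proof -
  define G where "G = (\<lambda>w. g w * exp (of_real ((cmod z)\<^sup>2) - 2 * cnj z * w))"
  have Ghol: "G holomorphic_on UNIV" unfolding G_def by (intro holomorphic_intros hol)
  have Gc: "continuous_on UNIV G" using Ghol by (rule holomorphic_on_imp_continuous_on)
  have Gm[measurable]: "G \<in> borel_measurable borel" using Gc by (rule borel_measurable_continuous_onI)
  define Q where "Q = {w. Re w \<in> {Re z-1..Re z+1} \<and> Im w \<in> {Im z-1..Im z+1}}"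
  have Qeq: "Q = cbox (Complex (Re z - 1) (Im z - 1)) (Complex (Re z + 1) (Im z + 1))"
    by (auto simp: Q_def in_cbox_complex_iff)
  have Qb[measurable]: "Q \<in> sets borel" unfolding Qeq by simp
  define F where "F w = ennreal (cmod (g w) powr (p w) * exp (- p w * (cmod w)\<^sup>2))" for w
  have Fm[measurable]: "F \<in> borel_measurable lebesgue" unfolding F_def by (rule modm[OF pm gm])
  have intF: "(\<integral>\<^sup>+w. F w \<partial>lebesgue) \<le> 1" using md unfolding fock_modular_def F_def .
  have mQ: "(\<integral>\<^sup>+w. indicator Q w \<partial>lebesgue) = 4"
  proof -
    have "(\<integral>\<^sup>+w. indicator Q w \<partial>lebesgue) = (\<integral>\<^sup>+w. indicator Q w \<partial>lborel)"
      by (rule nn_integral_completion)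
    also have "\<dots> = emeasure lborel Q" by simp
    also have "\<dots> = 4" unfolding Qeq emeasure_lborel_cbox_eq
      by (simp add: Basis_complex_def inner_complex_def)
    finally show ?thesis .
  qed
  have pw: "indicator Q w * ennreal (2 * cmod (G w)) \<le> ennreal (2 * exp 2) * (indicator Q w + F w)" for w
  proof (cases "w \<in> Q")
    case True
    define A where "A = cmod (g w) * exp (- (cmod w)\<^sup>2)"
    have A0: "0 \<le> A" unfolding A_def by simp
    have "(cmod (w - z))\<^sup>2 = (Re w - Re z)\<^sup>2 + (Im w - Im z)\<^sup>2" by (simp add: cmod_power2)
    also have "\<dots> \<le> 1 + 1" using True unfolding Q_def
      by (intro add_mono) (auto simp: abs_square_le_1 abs_le_iff)
    finally have d2: "(cmod (w - z))\<^sup>2 \<le> 2" by simp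
    have "cmod (G w) = A * exp ((cmod (w - z))\<^sup>2)" unfolding G_def A_def by (rule G_norm)
    also have "\<dots> \<le> A * exp 2" using d2 A0 by (intro mult_left_mono) auto
    finally have c1: "cmod (G w) \<le> A * exp 2" .
    have "A powr p w = cmod (g w) powr (p w) * exp (- p w * (cmod w)\<^sup>2)"
      unfolding A_def by (simp add: powr_mult exp_powr_real mult_ac)
    then have c2: "A \<le> 1 + cmod (g w) powr (p w) * exp (- p w * (cmod w)\<^sup>2)"
      using A_le[OF A0 p1[of w]] by simp
    have "2 * cmod (G w) \<le> 2 * exp 2 * (1 + cmod (g w) powr (p w) * exp (- p w * (cmod w)\<^sup>2))"
    proof -
      have "A * exp 2 \<le> (1 + cmod (g w) powr (p w) * exp (- p w * (cmod w)\<^sup>2)) * exp 2"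
        using c2 by (intro mult_right_mono) auto
      then show ?thesis using c1 by (simp add: algebra_simps)
    qed
    then have r: "ennreal (2 * cmod (G w)) \<le> ennreal (2 * exp 2 * (1 + cmod (g w) powr (p w) * exp (- p w * (cmod w)\<^sup>2)))"
      by (rule ennreal_leI)
    have "ennreal (2 * exp 2 * (1 + cmod (g w) powr (p w) * exp (- p w * (cmod w)\<^sup>2))) = ennreal (2 * exp 2) * (1 + F w)"
    proof -
      have X0: "0 \<le> cmod (g w) powr (p w) * exp (- p w * (cmod w)\<^sup>2)" by simp
      have "ennreal (2 * exp 2 * (1 + cmod (g w) powr (p w) * exp (- p w * (cmod w)\<^sup>2))) = ennreal (2 * exp 2) * ennreal (1 + cmod (g w) powr (p w) * exp (- p w * (cmod w)\<^sup>2))"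
        by (rule ennreal_mult) (use X0 in auto)
      moreover have "ennreal (1 + cmod (g w) powr (p w) * exp (- p w * (cmod w)\<^sup>2)) = 1 + F w"
        unfolding F_def using X0 by (subst ennreal_plus) auto
      ultimately show ?thesis by simp
    qed
    then have "ennreal (2 * cmod (G w)) \<le> ennreal (2 * exp 2) * (1 + F w)" using r by simp
    then show ?thesis using True by simp
  qed simp
  have "ennreal (pi * cmod (G z)) \<le> 4 * (\<integral>\<^sup>+w. indicator Q w * ennreal (2 * cmod (G w)) \<partial>lborel)"
    using mean[OF Ghol, of z] unfolding Q_def .
  also have "(\<integral>\<^sup>+w. indicator Q w * ennreal (2 * cmod (G w)) \<partial>lborel) = (\<integral>\<^sup>+w. indicator Q w * ennreal (2 * cmod (G w)) \<partial>lebesgue)"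
    by (rule nn_integral_completion[symmetric])
  also have "\<dots> \<le> (\<integral>\<^sup>+w. ennreal (2 * exp 2) * (indicator Q w + F w) \<partial>lebesgue)"
    by (rule nn_integral_mono) (rule pw)
  also have "\<dots> = ennreal (2 * exp 2) * ((\<integral>\<^sup>+w. indicator Q w \<partial>lebesgue) + (\<integral>\<^sup>+w. F w \<partial>lebesgue))"
  proof -
    have Ql[measurable]: "Q \<in> sets lebesgue" using Qb by (simp add: sets_completionI_sets)
    have "(\<integral>\<^sup>+w. ennreal (2 * exp 2) * (indicator Q w + F w) \<partial>lebesgue) = ennreal (2 * exp 2) * (\<integral>\<^sup>+w. (indicator Q w + F w) \<partial>lebesgue)"
      by (rule nn_integral_cmult) measurable
    also have "(\<integral>\<^sup>+w. (indicator Q w + F w) \<partial>lebesgue) = (\<integral>\<^sup>+w. indicator Q w \<partial>lebesgue) + (\<integral>\<^sup>+w. F w \<partial>lebesgue)"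
      by (rule nn_integral_add) measurable
    finally show ?thesis .
  qed
  also have "\<dots> \<le> ennreal (2 * exp 2) * (4 + 1)"
    unfolding mQ by (intro mult_left_mono add_left_mono intF) auto
  finally have "ennreal (pi * cmod (G z)) \<le> 4 * (ennreal (2 * exp 2) * (4 + 1))"
    by (simp add: mult_left_mono)
  also have "4 * (ennreal (2 * exp 2) * (4 + 1)) = ennreal (40 * exp 2)"
  proof -
    have "ennreal (40 * exp 2) = ennreal (4 * (2 * exp 2 * 5))" by simp
    also have "\<dots> = ennreal 4 * ennreal (2 * exp 2 * 5)" by (rule ennreal_mult) auto
    also have "ennreal (2 * exp 2 * 5) = ennreal (2 * exp 2) * ennreal 5" by (rule ennreal_mult) auto
    finally have eq40: "ennreal (40 * exp 2) = 4 * (ennreal (2 * exp 2) * 5)" by (simp only: ennreal_numeral)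
    have "(4::ennreal) + 1 = 5" by simp
    then show ?thesis using eq40 by (simp only:)
  qed
  finally have "pi * cmod (G z) \<le> 40 * exp 2"
    by (subst (asm) ennreal_le_iff) auto
  moreover have "cmod (G z) = cmod (g z) * exp (- (cmod z)\<^sup>2)"
    unfolding G_def using G_norm[of g z z] by simp
  ultimately have "cmod (g z) * exp (- (cmod z)\<^sup>2) \<le> 40 * exp 2 / pi"
    by (simp add: field_simps)
  then have "cmod (g z) \<le> 40 * exp 2 / pi * exp ((cmod z)\<^sup>2)"
    by (simp add: exp_minus field_simps)
  then show ?thesis by simp
qed


lemma nonempty_S:
  assumes pm: "p \<in> borel_measurable lebesgue" and p1: "\<And>z. 1 \<le> p z"
    and fm: "f \<in> borel_measurable lebesgue" and c: "c > 0"
    and fin: "fock_modular p (\<lambda>z. of_real c * f z) < \<infinity>"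
  shows "\<exists>t>0. fock_modular p (\<lambda>z. f z / of_real t) \<le> 1"
proof -
  obtain m where mM: "fock_modular p (\<lambda>z. of_real c * f z) = ennreal m" and m0: "0 \<le> m"
    using fin by (cases "fock_modular p (\<lambda>z. of_real c * f z)") auto
  define K where "K = max 1 m"
  have K1: "1 \<le> K" and Km: "m \<le> K" unfolding K_def by auto
  define t where "t = K / c"
  have t0: "t > 0" using K1 c unfolding t_def by auto
  have cfm: "(\<lambda>z. of_real c * f z) \<in> borel_measurable lebesgue" using fm by measurable
  have "fock_modular p (\<lambda>z. f z / of_real t) \<le> (\<integral>\<^sup>+w. ennreal (1/K) * ennreal (cmod (of_real c * f w) powr (p w) * exp (- p w * (cmod w)\<^sup>2)) \<partial>lebesgue)"
    unfolding fock_modular_def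
  proof (rule nn_integral_mono)
    fix w
    have eq: "cmod (f w / of_real t) = cmod (of_real c * f w) * (1/K)"
      using c K1 by (simp add: t_def norm_mult norm_divide field_simps)
    have y: "(1/K) powr (p w) \<le> 1/K" using K1 p1[of w] by (intro powr_le_one_le) auto
    have "cmod (f w / of_real t) powr (p w) = cmod (of_real c * f w) powr (p w) * (1/K) powr (p w)"
      unfolding eq using K1 by (subst powr_mult) auto
    also have "\<dots> \<le> cmod (of_real c * f w) powr (p w) * (1/K)"
      using y by (intro mult_left_mono) auto
    finally have "cmod (f w / of_real t) powr (p w) * exp (- p w * (cmod w)\<^sup>2) \<le> (cmod (of_real c * f w) powr (p w) * (1/K)) * exp (- p w * (cmod w)\<^sup>2)"
      by (rule mult_right_mono) simp
    then have "cmod (f w / of_real t) powr (p w) * exp (- p w * (cmod w)\<^sup>2) \<le> (1/K) * (cmod (of_real c * f w) powr (p w) * exp (- p w * (cmod w)\<^sup>2))"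
      by (simp only: mult_ac)
    then show "ennreal (cmod (f w / of_real t) powr (p w) * exp (- p w * (cmod w)\<^sup>2)) \<le> ennreal (1/K) * ennreal (cmod (of_real c * f w) powr (p w) * exp (- p w * (cmod w)\<^sup>2))"
      using K1 by (subst ennreal_mult[symmetric]) (auto intro: ennreal_leI)
  qed
  also have "\<dots> = ennreal (1/K) * fock_modular p (\<lambda>z. of_real c * f z)"
    unfolding fock_modular_def by (rule nn_integral_cmult) (rule modm[OF pm cfm])
  also have "\<dots> = ennreal (m / K)" unfolding mM using K1 m0 by (subst ennreal_mult[symmetric]) auto
  also have "\<dots> \<le> 1" using Km K1 by auto
  finally show ?thesis using t0 by blast
qed

theorem mainTheorem4:
  assumes "p \<in> var_exp_class"
  shows "\<exists>C>0. \<forall>f \<in> var_Fock p. \<forall>z. cmod (f z) \<le> C * exp ((cmod z)\<^sup>2) * var_L_norm p f"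
proof -
  have pm: "p \<in> borel_measurable lebesgue" and p1: "\<And>z. 1 \<le> p z"
    using assms by (auto simp: var_exp_class_def variable_exponent_def)
  define C where "C = 40 * exp 2 / pi"
  have C0: "C > 0" unfolding C_def by simp
  show ?thesis
  proof (intro exI[of _ C] conjI ballI allI C0)
    fix f z assume f: "f \<in> var_Fock p"
    have hol: "f holomorphic_on UNIV" and fm: "f \<in> borel_measurable lebesgue"
      and ex: "\<exists>c>0. fock_modular p (\<lambda>z. of_real c * f z) < \<infinity>"
      using f by (auto simp: var_Fock_def var_L_def)
    define S where "S = {t::real. t > 0 \<and> fock_modular p (\<lambda>z. f z / of_real t) \<le> 1}"
    have Ep: "C * exp ((cmod z)\<^sup>2) > 0" using C0 by simp
    have bound: "cmod (f z) / (C * exp ((cmod z)\<^sup>2)) \<le> t" if "t \<in> S" for t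
    proof -
      have t0: "t > 0" and md: "fock_modular p (\<lambda>z. f z / of_real t) \<le> 1" using that by (auto simp: S_def)
      have "(\<lambda>w. f w / of_real t) holomorphic_on UNIV" by (intro holomorphic_intros hol) (use t0 in auto)
      moreover have "(\<lambda>w. f w / of_real t) \<in> borel_measurable lebesgue" using fm by measurable
      ultimately have "cmod (f z / of_real t) \<le> C * exp ((cmod z)\<^sup>2)"
        unfolding C_def by (rule pointwise[OF _ pm p1 _ md])
      then have "cmod (f z) \<le> C * exp ((cmod z)\<^sup>2) * t" using t0 by (simp add: norm_divide field_simps)
      then show ?thesis using Ep by (simp add: field_simps)
    qed
    obtain c where "c > 0" "fock_modular p (\<lambda>z. of_real c * f z) < \<infinity>" using ex by blast
    then have ne: "S \<noteq> {}" using nonempty_S[OF pm p1 fm] unfolding S_def by blast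
    have "cmod (f z) / (C * exp ((cmod z)\<^sup>2)) \<le> Inf S" by (rule cInf_greatest[OF ne bound])
    moreover have "var_L_norm p f = Inf S" by (simp add: var_L_norm_def S_def)
    ultimately show "cmod (f z) \<le> C * exp ((cmod z)\<^sup>2) * var_L_norm p f"
      using Ep by (simp add: field_simps)
  qed
qed
end
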